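(* Let $\sigma\in C^1([0,\infty))$ be a nonnegative function and $u_*\in(0,\infty]$ such that $\sigma(s)=0$ for $s\ge u_*$, $\sigma(s)>0$ for $0\le s<u_*$, $\sigma$ is monotone decreasing on $[0,u_* )$, $\|\sigma\|_{C^1([0,u_*])}\le\mu<\infty$, and $\int_0^{u_*}\frac{ds}{\sigma(s)}=\infty$. Let $F(u):=\int_0^u\frac{ds}{\sigma(s)}$ for $u\in[0,u_* )$ (so $F$ maps $[0,u_* )$ onto $[0,\infty)$) and define $a(v):=\sigma(F^{-1}(v))$ for $v\in[0,\infty)$. Then $a$ is strictly positive and monotone decreasing, and for all $v\ge0$ and $y$ with $v+y\ge 0$, $$e^{-\mu|y|}\le\frac{a(v+y)}{a(v)}\le e^{\mu|y|}.$$ Moreover, for any $p\ge 2$, $$\frac{a(v)}{v^p}\int_0^v\frac{s^{p-2}}{a(s)}\,ds\longrightarrow 0\quad\text{as } v\to\infty.$$ *)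

theory Defs
  imports "HOL-Analysis.Analysis"
begin

definition below :: "ereal \<Rightarrow> real set" where
  "below ustar = {s. 0 \<le> s \<and> ereal s < ustar}"

definition below_cl :: "ereal \<Rightarrow> real set" where
  "below_cl ustar = {s. 0 \<le> s \<and> ereal s \<le> ustar}"

definition C1_norm_le :: "(real \<Rightarrow> real) \<Rightarrow> (real \<Rightarrow> real) \<Rightarrow> real set \<Rightarrow> real \<Rightarrow> bool" where
  "C1_norm_le f f' D mu \<longleftrightarrow>
     bdd_above ((\<lambda>s. \<bar>f s\<bar>) ` D) \<and> bdd_above ((\<lambda>s. \<bar>f' s\<bar>) ` D) \<and>
     (SUP s\<in>D. \<bar>f s\<bar>) + (SUP s\<in>D. \<bar>f' s\<bar>) \<le> mu"

definition Fsig :: "(real \<Rightarrow> real) \<Rightarrow> real \<Rightarrow> real" where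
  "Fsig \<sigma> u = integral {0..u} (\<lambda>s. 1 / \<sigma> s)"

definition asig :: "(real \<Rightarrow> real) \<Rightarrow> ereal \<Rightarrow> real \<Rightarrow> real" where
  "asig \<sigma> ustar v = \<sigma> (THE u. u \<in> below ustar \<and> Fsig \<sigma> u = v)"

end

theory Submission
  imports Defs
begin

theorem lemma2p3:
  fixes \<sigma> \<sigma>' :: "real \<Rightarrow> real" and ustar :: ereal and \<mu> :: real
  assumes C1: "\<And>x. x \<ge> 0 \<Longrightarrow> (\<sigma> has_real_derivative \<sigma>' x) (at x within {0..})"
      and C1cont: "continuous_on {0..} \<sigma>'"
      and nonneg: "\<And>s. s \<ge> 0 \<Longrightarrow> \<sigma> s \<ge> 0"
      and ustar_pos: "ustar > 0"
      and zero_above: "\<And>s. s \<ge> 0 \<Longrightarrow> ereal s \<ge> ustar \<Longrightarrow> \<sigma> s = 0"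
      and pos_below: "\<And>s. s \<in> below ustar \<Longrightarrow> \<sigma> s > 0"
      and decr: "\<And>s t. s \<in> below ustar \<Longrightarrow> t \<in> below ustar \<Longrightarrow> s \<le> t \<Longrightarrow> \<sigma> t \<le> \<sigma> s"
      and norm: "C1_norm_le \<sigma> \<sigma>' (below_cl ustar) \<mu>"
      and diverge: "(\<integral>\<^sup>+ s\<in>below ustar. ennreal (1 / \<sigma> s) \<partial>lborel) = \<infinity>"
  shows "(\<forall>v\<ge>0. asig \<sigma> ustar v > 0)
       \<and> (\<forall>v w. 0 \<le> v \<longrightarrow> v \<le> w \<longrightarrow> asig \<sigma> ustar w \<le> asig \<sigma> ustar v)
       \<and> (\<forall>v y. v \<ge> 0 \<longrightarrow> v + y \<ge> 0 \<longrightarrow>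
            exp (- \<mu> * \<bar>y\<bar>) \<le> asig \<sigma> ustar (v + y) / asig \<sigma> ustar v \<and>
            asig \<sigma> ustar (v + y) / asig \<sigma> ustar v \<le> exp (\<mu> * \<bar>y\<bar>))
       \<and> (\<forall>p::real. p \<ge> 2 \<longrightarrow>
            ((\<lambda>v. asig \<sigma> ustar v / v powr p *
                   integral {0..v} (\<lambda>s. s powr (p - 2) / asig \<sigma> ustar s)) \<longlongrightarrow> 0) at_top)"
proof -
  define g where "g = (\<lambda>s. 1 / \<sigma> s)"
  define F where "F = Fsig \<sigma>"
  have Fdef: "F = (\<lambda>u. integral {0..u} g)"
    by (rule ext) (simp add: F_def Fsig_def g_def)
  have contS: "continuous_on {0..} \<sigma>"
    by (rule DERIV_continuous_on) (use C1 in auto)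
  have bel: "x \<in> below ustar" if "u \<in> below ustar" "0 \<le> x" "x \<le> u" for u x
    using that unfolding below_def by auto (metis ereal_less_eq(3) order_le_less_trans)
  have belI: "{0..u} \<subseteq> below ustar" if "u \<in> below ustar" for u
    using bel[OF that] by auto
  have zb: "0 \<in> below ustar"
    using ustar_pos unfolding below_def by (simp add: zero_ereal_def)
  have belnn: "x \<in> below ustar \<Longrightarrow> 0 \<le> x" for x unfolding below_def by auto
  have contg: "continuous_on {0..u} g" if "u \<in> below ustar" for u
    unfolding g_def
  proof (intro continuous_on_divide continuous_on_const)
    show "continuous_on {0..u} \<sigma>" using contS by (rule continuous_on_subset) auto
    show "\<forall>x\<in>{0..u}. \<sigma> x \<noteq> 0" using pos_below belI[OF that] by force
  qed
  have Fint: "(g has_integral F u) {0..u}" if "u \<in> below ustar" for u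
    unfolding Fdef using integrable_continuous_real[OF contg[OF that]]
    by (simp add: integrable_integral)
  have F0: "F 0 = 0" unfolding Fdef by simp
  have Fder: "DERIV F x :> g x" if "u \<in> below ustar" "0 < x" "x < u" for u x
  proof -
    have "(F has_real_derivative g x) (at x within {0..u})"
      unfolding Fdef by (rule integral_has_real_derivative[OF contg[OF that(1)]]) (use that in auto)
    moreover have "at x within {0..u} = at x"
      by (rule at_within_interior) (use that in auto)
    ultimately show ?thesis by simp
  qed
  have Fcont: "continuous_on {0..u} F" if "u \<in> below ustar" for u
    unfolding Fdef by (rule DERIV_continuous_on, rule integral_has_real_derivative[OF contg[OF that]])
  have Sder: "DERIV \<sigma> x :> \<sigma>' x" if "0 < x" for x
  proof -
    have "at x within {0..} = at x"
      by (rule at_within_interior) (use that in auto)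
    then show ?thesis using C1[of x] that by simp
  qed
  have bcl: "below ustar \<subseteq> below_cl ustar" unfolding below_def below_cl_def by auto
  have Sbound: "\<bar>\<sigma>' s\<bar> \<le> \<mu>" and mu0: "0 \<le> \<mu>" if "s \<in> below ustar" for s
  proof -
    have b1: "bdd_above ((\<lambda>s. \<bar>\<sigma> s\<bar>) ` below_cl ustar)" and b2: "bdd_above ((\<lambda>s. \<bar>\<sigma>' s\<bar>) ` below_cl ustar)"
      and sm: "(SUP s\<in>below_cl ustar. \<bar>\<sigma> s\<bar>) + (SUP s\<in>below_cl ustar. \<bar>\<sigma>' s\<bar>) \<le> \<mu>"
      using norm unfolding C1_norm_le_def by auto
    have "\<bar>\<sigma>' s\<bar> \<le> (SUP s\<in>below_cl ustar. \<bar>\<sigma>' s\<bar>)"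
      by (rule cSUP_upper[OF _ b2]) (use bcl that in auto)
    moreover have "\<bar>\<sigma> 0\<bar> \<le> (SUP s\<in>below_cl ustar. \<bar>\<sigma> s\<bar>)"
      by (rule cSUP_upper[OF _ b1]) (use bcl zb in auto)
    ultimately show "\<bar>\<sigma>' s\<bar> \<le> \<mu>" "0 \<le> \<mu>" using sm by linarith+
  qed
  have mu0: "0 \<le> \<mu>" using mu0[OF zb] .
  have K: "ln (\<sigma> u1) + \<mu> * F u1 \<le> ln (\<sigma> u2) + \<mu> * F u2"
    if u: "u1 \<in> below ustar" "u2 \<in> below ustar" "u1 \<le> u2" for u1 u2
  proof (rule DERIV_nonneg_imp_increasing_open[OF u(3)])
    fix x assume x: "u1 < x" "x < u2"
    have x0: "0 < x" using x belnn[OF u(1)] by auto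
    have xb: "x \<in> below ustar" using bel[OF u(2), of x] x0 x by auto
    have sp: "\<sigma> x > 0" using pos_below[OF xb] .
    have "DERIV (\<lambda>x. ln (\<sigma> x) + \<mu> * F x) x :> (1 / \<sigma> x * \<sigma>' x + \<mu> * g x)"
      by (intro DERIV_add DERIV_cmult DERIV_chain2[OF DERIV_ln_divide] Sder Fder[OF u(2)] sp x0 x)
    moreover have "1 / \<sigma> x * \<sigma>' x + \<mu> * g x \<ge> 0"
    proof -
      have "1 / \<sigma> x * \<sigma>' x + \<mu> * g x = (\<sigma>' x + \<mu>) / \<sigma> x"
        unfolding g_def by (simp add: add_divide_distrib)
      moreover have "\<sigma>' x + \<mu> \<ge> 0" using Sbound[OF xb] by linarith
      ultimately show ?thesis using sp by simp
    qed
    ultimately show "\<exists>y. DERIV (\<lambda>x. ln (\<sigma> x) + \<mu> * F x) x :> y \<and> 0 \<le> y" by blast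
  next
    have sub: "{u1..u2} \<subseteq> {0..u2}" using belnn[OF u(1)] by auto
    have cS: "continuous_on {u1..u2} \<sigma>" using contS by (rule continuous_on_subset) (use sub in auto)
    have pos: "\<forall>x\<in>{u1..u2}. \<sigma> x \<noteq> 0"
    proof
      fix x assume "x \<in> {u1..u2}"
      then have "x \<in> below ustar" using bel[OF u(2)] sub by auto
      then show "\<sigma> x \<noteq> 0" using pos_below by force
    qed
    show "continuous_on {u1..u2} (\<lambda>x. ln (\<sigma> x) + \<mu> * F x)"
      by (intro continuous_on_add continuous_on_ln cS pos continuous_on_mult_left
          continuous_on_subset[OF Fcont[OF u(2)] sub])
  qed
  have S0: "\<sigma> 0 > 0" using pos_below[OF zb] .
  have K2: "F u1 - u1 / \<sigma> 0 \<le> F u2 - u2 / \<sigma> 0"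
    if u: "u1 \<in> below ustar" "u2 \<in> below ustar" "u1 \<le> u2" for u1 u2
  proof (rule DERIV_nonneg_imp_increasing_open[OF u(3)])
    fix x assume x: "u1 < x" "x < u2"
    have x0: "0 < x" using x belnn[OF u(1)] by auto
    have xb: "x \<in> below ustar" using bel[OF u(2), of x] x0 x by auto
    have sp: "\<sigma> x > 0" using pos_below[OF xb] .
    have "DERIV (\<lambda>x. F x - x / \<sigma> 0) x :> (g x - 1 / \<sigma> 0)"
      by (intro DERIV_diff DERIV_cdivide Fder[OF u(2)] x0 x DERIV_ident)
    moreover have "g x - 1 / \<sigma> 0 \<ge> 0"
      using decr[OF zb xb] x0 sp unfolding g_def by (simp add: frac_le)
    ultimately show "\<exists>y. DERIV (\<lambda>x. F x - x / \<sigma> 0) x :> y \<and> 0 \<le> y" by blast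
  next
    have sub: "{u1..u2} \<subseteq> {0..u2}" using belnn[OF u(1)] by auto
    show "continuous_on {u1..u2} (\<lambda>x. F x - x / \<sigma> 0)"
      by (intro continuous_on_diff continuous_on_divide continuous_on_id continuous_on_const
          continuous_on_subset[OF Fcont[OF u(2)] sub]) (use S0 in auto)
  qed
  have Fstrict: "F u1 < F u2" if u: "u1 \<in> below ustar" "u2 \<in> below ustar" "u1 < u2" for u1 u2
  proof -
    have "u1 / \<sigma> 0 < u2 / \<sigma> 0" using u(3) S0 by (simp add: divide_strict_right_mono)
    then show ?thesis using K2[OF u(1,2)] u(3) by linarith
  qed
  have unb: "\<exists>u\<in>below ustar. v \<le> F u" for v
  proof (rule ccontr)
    assume "\<not> ?thesis"
    then have lt: "\<forall>u\<in>below ustar. F u < v" by auto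
    obtain uu :: "nat \<Rightarrow> real" where uub: "\<And>n. uu n \<in> below ustar" and uinc: "incseq uu"
      and ucov: "\<And>s. s \<in> below ustar \<Longrightarrow> \<exists>n. s \<le> uu n"
    proof (cases ustar)
      case (real r)
      then have r0: "r > 0" using ustar_pos by (simp add: zero_ereal_def)
      show ?thesis
      proof (rule that[of "\<lambda>n. r - r / real (Suc n)"])
        show "r - r / real (Suc n) \<in> below ustar" for n
        proof -
          have "r / real (Suc n) \<le> r / 1" using r0 by (intro divide_left_mono) auto
          moreover have "r / real (Suc n) > 0" using r0 by simp
          ultimately show ?thesis unfolding below_def real by auto
        qed
        show "incseq (\<lambda>n. r - r / real (Suc n))"
          by (rule incseq_SucI) (use r0 in \<open>simp add: divide_left_mono\<close>)
        show "\<exists>n. s \<le> r - r / real (Suc n)" if "s \<in> below ustar" for s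
        proof -
          from that have s: "0 \<le> s" "s < r" unfolding below_def real by auto
          obtain n :: nat where n: "n \<noteq> 0" "inverse (real n) < (r - s) / r"
            using real_arch_inverse[of "(r-s)/r"] s r0 by auto
          have "r / real (Suc n) \<le> r / real n" using n r0 by (intro divide_left_mono) auto
          also have "\<dots> < r - s" using n(2) r0 by (simp add: field_simps)
          finally have "s \<le> r - r / real (Suc n)" by linarith
          then show ?thesis by blast
        qed
      qed
    next
      case PInf
      show ?thesis
      proof (rule that[of "\<lambda>n. real n"])
        show "real n \<in> below ustar" for n unfolding below_def PInf by auto
        show "incseq (\<lambda>n. real n)" by (simp add: incseq_def)
        show "\<exists>n. s \<le> real n" for s by (meson real_arch_simple)
      qed
    next
      case MInf with ustar_pos show ?thesis by simp
    qed
    define f where "f n x = ennreal (g x) * indicator {0..uu n} x" for n x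
    have fint: "integral\<^sup>N lborel (f n) = ennreal (F (uu n))" for n
    proof -
      have "\<And>x. x \<in> {0..uu n} \<Longrightarrow> 0 \<le> g x"
        using pos_below bel[OF uub[of n]] unfolding g_def by (simp add: less_imp_le)
      then show ?thesis
        unfolding f_def by (rule nn_integral_has_integral_lebesgue'[OF _ Fint[OF uub]])
    qed
    have fmeas: "f n \<in> borel_measurable lborel" for n
    proof -
      have "(\<lambda>x. indicator {0..uu n} x *\<^sub>R g x) \<in> borel_measurable borel"
        by (rule borel_measurable_continuous_on_indicator) (auto intro: contg uub)
      from measurable_compose[OF this measurable_ennreal]
      have "(\<lambda>x. ennreal (indicator {0..uu n} x *\<^sub>R g x)) \<in> borel_measurable borel" .
      moreover have "f n = (\<lambda>x. ennreal (indicator {0..uu n} x *\<^sub>R g x))"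
        by (auto simp: f_def fun_eq_iff split: split_indicator)
      ultimately show ?thesis by simp
    qed
    have finc: "incseq f"
    proof (rule incseq_SucI, rule le_funI)
      fix n x
      have "uu n \<le> uu (Suc n)" using uinc by (simp add: incseq_SucD)
      then show "f n x \<le> f (Suc n) x" by (auto simp: f_def split: split_indicator)
    qed
    have sup: "(\<lambda>x. ennreal (1 / \<sigma> x) * indicator (below ustar) x) = (\<lambda>x. SUP n. f n x)"
    proof (rule ext)
      fix x
      show "ennreal (1 / \<sigma> x) * indicator (below ustar) x = (SUP n. f n x)"
      proof (cases "x \<in> below ustar")
        case True
        then obtain n where n: "x \<le> uu n" using ucov by blast
        then have "f n x = ennreal (g x)" using belnn[OF True] by (simp add: f_def indicator_def)
        moreover have "f m x \<le> ennreal (g x)" for m by (simp add: f_def indicator_def)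
        ultimately have "(SUP n. f n x) = ennreal (g x)"
          by (intro antisym SUP_least) (auto intro: SUP_upper2[of n])
        then show ?thesis using True by (simp add: g_def)
      next
        case False
        then have "f n x = 0" for n using belI[OF uub[of n]] by (auto simp: f_def indicator_def)
        then show ?thesis using False by simp
      qed
    qed
    have "(\<integral>\<^sup>+ s\<in>below ustar. ennreal (1 / \<sigma> s) \<partial>lborel) = (SUP n. integral\<^sup>N lborel (f n))"
      using nn_integral_monotone_convergence_SUP[OF finc fmeas] sup by simp
    also have "\<dots> \<le> ennreal v"
    proof (rule SUP_least)
      fix n
      have "F (uu n) \<le> v" using lt uub by (simp add: less_imp_le)
      then show "integral\<^sup>N lborel (f n) \<le> ennreal v" using fint by (simp add: ennreal_leI)
    qed
    finally show False using diverge by (auto simp: top_unique)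
  qed
  have ex1: "\<exists>!u. u \<in> below ustar \<and> F u = v" if v0: "0 \<le> v" for v
  proof -
    obtain u0 where u0: "u0 \<in> below ustar" "v \<le> F u0" using unb by blast
    obtain x where x: "0 \<le> x" "x \<le> u0" "F x = v"
      using IVT'[of F 0 v u0] F0 v0 u0 belnn[OF u0(1)] Fcont[OF u0(1)] by auto
    have xb: "x \<in> below ustar" using bel[OF u0(1)] x by auto
    show ?thesis
    proof (rule ex1I[of _ x])
      show "x \<in> below ustar \<and> F x = v" using xb x by auto
      fix y assume y: "y \<in> below ustar \<and> F y = v"
      show "y = x"
      proof (rule ccontr)
        assume "y \<noteq> x"
        then have "y < x \<or> x < y" by linarith
        then show False using Fstrict[OF _ xb] Fstrict[OF xb] y x(3) by force
      qed
    qed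
  qed
  define U where "U v = (THE u. u \<in> below ustar \<and> F u = v)" for v
  have Uprop: "U v \<in> below ustar \<and> F (U v) = v" if "0 \<le> v" for v
    unfolding U_def by (rule theI'[OF ex1[OF that]])
  have aeq: "asig \<sigma> ustar v = \<sigma> (U v)" for v unfolding asig_def U_def F_def ..
  have Umono: "U v \<le> U w" if vw: "0 \<le> v" "v \<le> w" for v w
  proof (rule ccontr)
    assume "\<not> U v \<le> U w"
    then have "U w < U v" by simp
    moreover have "U w \<in> below ustar" "U v \<in> below ustar" using Uprop vw by auto
    ultimately have "F (U w) < F (U v)" using Fstrict by blast
    then show False using Uprop vw by auto
  qed
  have part1: "\<forall>v\<ge>0. asig \<sigma> ustar v > 0" using aeq Uprop pos_below by auto
  have part2: "\<forall>v w. 0 \<le> v \<longrightarrow> v \<le> w \<longrightarrow> asig \<sigma> ustar w \<le> asig \<sigma> ustar v"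
  proof (intro allI impI)
    fix v w :: real assume vw: "0 \<le> v" "v \<le> w"
    show "asig \<sigma> ustar w \<le> asig \<sigma> ustar v"
      using decr[OF Uprop[OF vw(1), THEN conjunct1] Uprop[of w, THEN conjunct1] Umono[OF vw]] vw aeq
      by simp
  qed
  have part3: "\<forall>v y. v \<ge> 0 \<longrightarrow> v + y \<ge> 0 \<longrightarrow>
            exp (- \<mu> * \<bar>y\<bar>) \<le> asig \<sigma> ustar (v + y) / asig \<sigma> ustar v \<and>
            asig \<sigma> ustar (v + y) / asig \<sigma> ustar v \<le> exp (\<mu> * \<bar>y\<bar>)"
  proof (intro allI impI)
    fix v y :: real assume v: "0 \<le> v" "0 \<le> v + y"
    define A where "A = \<sigma> (U v)"
    define B where "B = \<sigma> (U (v + y))"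
    have ub1: "U v \<in> below ustar" and ub2: "U (v + y) \<in> below ustar"
      and F1: "F (U v) = v" and F2: "F (U (v + y)) = v + y" using Uprop v by auto
    have A0: "A > 0" "B > 0" unfolding A_def B_def using pos_below ub1 ub2 by auto
    have ratio: "B / A = exp (ln B - ln A)" using A0 by (simp add: exp_diff)
    have AB: "asig \<sigma> ustar (v + y) / asig \<sigma> ustar v = B / A" unfolding A_def B_def aeq ..
    show "exp (- \<mu> * \<bar>y\<bar>) \<le> asig \<sigma> ustar (v + y) / asig \<sigma> ustar v \<and>
            asig \<sigma> ustar (v + y) / asig \<sigma> ustar v \<le> exp (\<mu> * \<bar>y\<bar>)"
      unfolding AB
    proof (cases "0 \<le> y")
      case True
      have le: "U v \<le> U (v + y)" using Umono v True by auto
      have "ln A + \<mu> * v \<le> ln B + \<mu> * (v + y)"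
        using K[OF ub1 ub2 le] F1 F2 unfolding A_def B_def by simp
      then have l: "- \<mu> * \<bar>y\<bar> \<le> ln B - ln A" using True by (simp add: algebra_simps)
      have "B \<le> A" using decr[OF ub1 ub2 le] unfolding A_def B_def .
      then have "B / A \<le> 1" using A0 by simp
      moreover have "1 \<le> exp (\<mu> * \<bar>y\<bar>)" using mu0 by simp
      moreover have "exp (- \<mu> * \<bar>y\<bar>) \<le> B / A" unfolding ratio using l by simp
      ultimately show "exp (- \<mu> * \<bar>y\<bar>) \<le> B / A \<and> B / A \<le> exp (\<mu> * \<bar>y\<bar>)" by linarith
    next
      case False
      have le: "U (v + y) \<le> U v" using Umono v False by auto
      have "ln B + \<mu> * (v + y) \<le> ln A + \<mu> * v"
        using K[OF ub2 ub1 le] F1 F2 unfolding A_def B_def by simp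
      then have l: "ln B - ln A \<le> \<mu> * \<bar>y\<bar>" using False by (simp add: algebra_simps)
      have "A \<le> B" using decr[OF ub2 ub1 le] unfolding A_def B_def .
      then have "1 \<le> B / A" using A0 by simp
      moreover have "exp (- \<mu> * \<bar>y\<bar>) \<le> 1" using mu0 by simp
      moreover have "B / A \<le> exp (\<mu> * \<bar>y\<bar>)" unfolding ratio using l by simp
      ultimately show "exp (- \<mu> * \<bar>y\<bar>) \<le> B / A \<and> B / A \<le> exp (\<mu> * \<bar>y\<bar>)" by linarith
    qed
  qed
  have part4: "\<forall>p::real. p \<ge> 2 \<longrightarrow>
            ((\<lambda>v. asig \<sigma> ustar v / v powr p *
                   integral {0..v} (\<lambda>s. s powr (p - 2) / asig \<sigma> ustar s)) \<longlongrightarrow> 0) at_top"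
  proof (intro allI impI)
    fix p :: real assume p: "2 \<le> p"
    define a where "a = asig \<sigma> ustar"
    have bnd: "0 \<le> a v / v powr p * integral {0..v} (\<lambda>s. s powr (p - 2) / a s) \<and>
               a v / v powr p * integral {0..v} (\<lambda>s. s powr (p - 2) / a s) \<le> inverse v"
      if v: "0 < v" for v
    proof -
      have av: "a v > 0" using part1 v unfolding a_def by auto
      have ineq: "s powr (p - 2) / a s \<le> v powr (p - 2) / a v" if "s \<in> {0..v}" for s
      proof -
        have "s powr (p - 2) \<le> v powr (p - 2)" using that p v by (auto intro: powr_mono2)
        moreover have "a v \<le> a s" using part2 that unfolding a_def by auto
        ultimately show ?thesis using av by (meson frac_le powr_ge_zero)
      qed
      have nn: "0 \<le> s powr (p - 2) / a s" if "s \<in> {0..v}" for s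
        using part1 that unfolding a_def by auto
      define I where "I = integral {0..v} (\<lambda>s. s powr (p - 2) / a s)"
      have I: "0 \<le> I \<and> I \<le> v * (v powr (p - 2) / a v)"
      proof (cases "(\<lambda>s. s powr (p - 2) / a s) integrable_on {0..v}")
        case True
        have "I \<le> integral {0..v} (\<lambda>s. v powr (p - 2) / a v)"
          unfolding I_def by (rule integral_le[OF True]) (auto intro: ineq)
        also have "\<dots> = v * (v powr (p - 2) / a v)" using v by simp
        finally show ?thesis using integral_nonneg[OF True nn] I_def by simp
      next
        case False
        then have "I = 0" unfolding I_def by (simp add: not_integrable_integral)
        then show ?thesis using v av by simp
      qed
      have e: "v powr p = v powr (p - 2) * v * v"
      proof -
        have "v powr p = v powr ((p - 2) + 1 + 1)" by simp
        also have "\<dots> = v powr (p - 2) * v * v" using v by (subst powr_add, subst powr_add) simp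
        finally show ?thesis .
      qed
      have pp: "v powr (p - 2) > 0" using v by simp
      have "a v / v powr p * I \<le> a v / v powr p * (v * (v powr (p - 2) / a v))"
        using I av v by (intro mult_left_mono) auto
      also have "\<dots> = inverse v" unfolding e using av v pp by (simp add: field_simps)
      finally show ?thesis using I av v unfolding I_def by simp
    qed
    show "((\<lambda>v. asig \<sigma> ustar v / v powr p *
                   integral {0..v} (\<lambda>s. s powr (p - 2) / asig \<sigma> ustar s)) \<longlongrightarrow> 0) at_top"
      unfolding a_def[symmetric]
    proof (rule tendsto_sandwich[of "\<lambda>_. 0" _ _ "\<lambda>v. inverse v"])
      show "eventually (\<lambda>v. 0 \<le> a v / v powr p * integral {0..v} (\<lambda>s. s powr (p - 2) / a s)) at_top"
        using eventually_gt_at_top[of "0::real"] by eventually_elim (use bnd in blast)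
      show "eventually (\<lambda>v. a v / v powr p * integral {0..v} (\<lambda>s. s powr (p - 2) / a s) \<le> inverse v) at_top"
        using eventually_gt_at_top[of "0::real"] by eventually_elim (use bnd in blast)
      show "((\<lambda>_. 0) \<longlongrightarrow> (0::real)) at_top" by simp
      show "((\<lambda>v::real. inverse v) \<longlongrightarrow> 0) at_top" by (rule tendsto_inverse_0_at_top[OF filterlim_ident])
    qed
  qed
  show ?thesis using part1 part2 part3 part4 by blast
qed

end
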